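(* Let $r\ge 4$ and let $w:E(K_r)\to\mathbb{R}_{>0}$ be a positive edge-weighting of the complete graph $K_r$ on vertex set $U$. For each edge $e$ let $C_w(e)$ be the maximum of $w(C)=\sum_{f\in E(C)}w(f)$ over all cycles $C$ of $K_r$ containing $e$. Then $$\sum_{e\in E(K_r)}\frac{w(e)}{C_w(e)}=\frac{r-1}{2}$$ holds if and only if $w$ is vertex-induced, i.e. there exists $a:U\to\mathbb{R}_{\ge 0}$ with $w(uv)=\frac{a(u)+a(v)}{2}$ for all edges $uv$. In this case, $C_w(e)=\sum_{v\in U}a(v)$ for all $e\in E(K_r)$. *)

theory Defs
  imports Complex_Main
begin

definition K_edges :: "'a set \<Rightarrow> 'a set set" where
  "K_edges U = {e. e \<subseteq> U \<and> card e = 2}"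

definition is_cycle_list :: "'a set \<Rightarrow> 'a list \<Rightarrow> bool" where
  "is_cycle_list U vs \<longleftrightarrow> distinct vs \<and> 3 \<le> length vs \<and> set vs \<subseteq> U"

definition cycle_edges :: "'a list \<Rightarrow> 'a set set" where
  "cycle_edges vs = {{vs ! i, vs ! ((i + 1) mod length vs)} | i. i < length vs}"

definition Cw :: "'a set \<Rightarrow> ('a set \<Rightarrow> real) \<Rightarrow> 'a set \<Rightarrow> real" where
  "Cw U w e = Max {sum w (cycle_edges vs) | vs. is_cycle_list U vs \<and> e \<in> cycle_edges vs}"

definition vertex_induced_by :: "'a set \<Rightarrow> ('a set \<Rightarrow> real) \<Rightarrow> ('a \<Rightarrow> real) \<Rightarrow> bool" where
  "vertex_induced_by U w a \<longleftrightarrow> (\<forall>v\<in>U. 0 \<le> a v) \<and>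
     (\<forall>u\<in>U. \<forall>v\<in>U. u \<noteq> v \<longrightarrow> w {u, v} = (a u + a v) / 2)"

end

theory Submission
  imports Defs "HOL-Combinatorics.Multiset_Permutations"
begin


definition eE :: "'a list \<Rightarrow> nat \<Rightarrow> 'a set" where
  "eE vs i = {vs!i, vs!((i+1) mod length vs)}"

lemma cycle_edges_eq: "cycle_edges vs = eE vs ` {..<length vs}"
  unfolding cycle_edges_def eE_def by auto

lemma eE_inj:
  assumes "distinct vs" "3 \<le> length vs"
  shows "inj_on (eE vs) {..<length vs}"
proof
  fix i j assume i: "i \<in> {..<length vs}" and j: "j \<in> {..<length vs}" and eq: "eE vs i = eE vs j"
  let ?n = "length vs"
  have n: "0 < ?n" using assms by auto
  have i1: "(i+1) mod ?n < ?n" "(j+1) mod ?n < ?n" using n by auto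
  from eq have "(vs!i = vs!j \<and> vs!((i+1) mod ?n) = vs!((j+1) mod ?n)) \<or>
      (vs!i = vs!((j+1) mod ?n) \<and> vs!((i+1) mod ?n) = vs!j)"
    unfolding eE_def by (auto simp: doubleton_eq_iff)
  then show "i = j"
  proof
    assume "vs!i = vs!j \<and> vs!((i+1) mod ?n) = vs!((j+1) mod ?n)"
    then show ?thesis using i j assms(1) by (simp add: nth_eq_iff_index_eq)
  next
    assume h: "vs!i = vs!((j+1) mod ?n) \<and> vs!((i+1) mod ?n) = vs!j"
    have a: "i = (j+1) mod ?n"
      using nth_eq_iff_index_eq[OF assms(1), of i "(j+1) mod ?n"] i i1 h by auto
    have b: "j = (i+1) mod ?n"
      using nth_eq_iff_index_eq[OF assms(1), of "(i+1) mod ?n" j] j i1 h by auto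
    show ?thesis using a b i j assms(2)
      by (metis (no_types, lifting) One_nat_def Suc_eq_plus1 add_numeral_left
    le_add2 mod_Suc mod_less not_less_eq_eq numeral_Bit1 numeral_One
    plus_1_eq_Suc lessThan_iff)
  qed
qed

lemma W_sum:
  assumes "distinct vs" "3 \<le> length vs"
  shows "sum f (cycle_edges vs) = (\<Sum>i<length vs. f (eE vs i))"
  unfolding cycle_edges_eq using sum.reindex[OF eE_inj[OF assms], of f] by simp

lemma rot_sum:
  assumes "0 < (n::nat)"
  shows "(\<Sum>i<n. h ((i+1) mod n)) = (\<Sum>i<n. (h i :: real))"
proof -
  obtain m where m: "n = Suc m" using assms by (cases n) auto
  have "(\<Sum>i<Suc m. h ((i+1) mod Suc m)) = (\<Sum>i<m. h ((i+1) mod Suc m)) + h 0"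
    by (simp add: sum.lessThan_Suc)
  also have "(\<Sum>i<m. h ((i+1) mod Suc m)) = (\<Sum>i<m. h (Suc i))"
    by (rule sum.cong) auto
  also have "\<dots> + h 0 = (\<Sum>i<Suc m. h i)" by (subst sum.lessThan_Suc_shift) simp
  finally show ?thesis using m by simp
qed

lemma sum_nth_distinct:
  assumes "distinct vs"
  shows "(\<Sum>i<length vs. (a (vs!i) :: real)) = sum a (set vs)"
proof -
  have "set vs = (!) vs ` {..<length vs}" by (auto simp: set_conv_nth)
  moreover have "inj_on ((!) vs) {..<length vs}" using assms by (simp add: inj_on_def nth_eq_iff_index_eq)
  ultimately show ?thesis by (simp add: sum.reindex)
qed

lemma cyc_weight:
  fixes w :: "'a set \<Rightarrow> real" and a :: "'a \<Rightarrow> real"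
  assumes "\<forall>u\<in>U. \<forall>v\<in>U. u \<noteq> v \<longrightarrow> w {u,v} = (a u + a v) / 2"
    and "is_cycle_list U vs"
  shows "sum w (cycle_edges vs) = sum a (set vs)"
proof -
  let ?n = "length vs"
  have d: "distinct vs" and l: "3 \<le> ?n" and s: "set vs \<subseteq> U" using assms(2) by (auto simp: is_cycle_list_def)
  have n: "0 < ?n" using l by auto
  have "sum w (cycle_edges vs) = (\<Sum>i<?n. w (eE vs i))" using W_sum[OF d l] .
  also have "\<dots> = (\<Sum>i<?n. (a (vs!i) + a (vs!((i+1) mod ?n))) / 2)"
  proof (rule sum.cong[OF refl])
    fix i assume i: "i \<in> {..<?n}"
    have m: "(i+1) mod ?n < ?n" using n by auto
    have ne: "vs!i \<noteq> vs!((i+1) mod ?n)"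
    proof
      assume "vs!i = vs!((i+1) mod ?n)"
      then have "i = (i+1) mod ?n" using d i m by (simp add: nth_eq_iff_index_eq)
      then show False using l i
        by (metis add_diff_cancel_left' lessThan_iff mod_less mod_self n_not_Suc_n not_less_eq Suc_eq_plus1 linorder_neqE_nat zero_neq_numeral le_antisym less_imp_le_nat add.commute numeral_3_eq_3 mod_Suc)
    qed
    show "w (eE vs i) = (a (vs!i) + a (vs!((i+1) mod ?n))) / 2"
      unfolding eE_def using assms(1) ne s i m by (auto intro!: nth_mem)
  qed
  also have "\<dots> = ((\<Sum>i<?n. a (vs!i)) + (\<Sum>i<?n. a (vs!((i+1) mod ?n)))) / 2"
    by (simp only: sum_divide_distrib[symmetric] sum.distrib)
  also have "(\<Sum>i<?n. a (vs!((i+1) mod ?n))) = (\<Sum>i<?n. a (vs!i))"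
    using rot_sum[OF n, of "\<lambda>i. a (vs!i)"] by simp
  finally show ?thesis using sum_nth_distinct[OF d] by simp
qed

lemma perm_split:
  assumes "finite A" "A \<noteq> {}"
  shows "(\<Sum>l\<in>permutations_of_set A. (F l :: real)) = (\<Sum>x\<in>A. \<Sum>l\<in>permutations_of_set (A-{x}). F (x#l))"
proof -
  have "(\<Sum>l\<in>permutations_of_set A. F l) = (\<Sum>l\<in>(\<Union>x\<in>A. (\<lambda>xs. x # xs) ` permutations_of_set (A - {x})). F l)"
    by (subst permutations_of_set_nonempty[OF assms(2)]) (rule refl)
  also have "\<dots> = (\<Sum>x\<in>A. \<Sum>l\<in>(\<lambda>xs. x # xs) ` permutations_of_set (A - {x}). F l)"
    by (rule sum.UNION_disjoint) (use assms in auto)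
  also have "\<dots> = (\<Sum>x\<in>A. \<Sum>l\<in>permutations_of_set (A-{x}). F (x#l))"
    by (rule sum.cong[OF refl]) (simp add: sum.reindex)
  finally show ?thesis .
qed

lemma first_two_sum:
  assumes "finite U" "2 \<le> card U"
  shows "(\<Sum>vs\<in>permutations_of_set U. (g (vs!0) (vs!1) :: real)) = fact (card U - 2) * (\<Sum>x\<in>U. \<Sum>y\<in>U-{x}. g x y)"
proof -
  have ne: "U \<noteq> {}" using assms by auto
  have "(\<Sum>vs\<in>permutations_of_set U. g (vs!0) (vs!1)) = (\<Sum>x\<in>U. \<Sum>l\<in>permutations_of_set (U-{x}). g x (l!0))"
    using perm_split[OF assms(1) ne] by simp
  also have "\<dots> = (\<Sum>x\<in>U. \<Sum>y\<in>U-{x}. \<Sum>l\<in>permutations_of_set (U-{x}-{y}). g x y)"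
  proof (rule sum.cong[OF refl])
    fix x assume x: "x \<in> U"
    have "card (U - {x}) \<ge> 1" using assms x by auto
    then have "U - {x} \<noteq> {}" by (metis card.empty not_one_le_zero)
    then show "(\<Sum>l\<in>permutations_of_set (U-{x}). g x (l!0)) = (\<Sum>y\<in>U-{x}. \<Sum>l\<in>permutations_of_set (U-{x}-{y}). g x y)"
      using perm_split[of "U-{x}" "\<lambda>l. g x (l!0)"] assms(1) by simp
  qed
  also have "\<dots> = (\<Sum>x\<in>U. \<Sum>y\<in>U-{x}. fact (card U - 2) * g x y)"
  proof (intro sum.cong refl)
    fix x y assume x: "x \<in> U" and y: "y \<in> U - {x}"
    have "card (U-{x}-{y}) = card U - 2" using x y assms(1) by (simp add: card_Diff_singleton_if)
    then show "(\<Sum>l\<in>permutations_of_set (U-{x}-{y}). g x y) = fact (card U - 2) * g x y"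
      using assms(1) by simp
  qed
  finally show ?thesis by (simp add: sum_distrib_left)
qed

lemma rot_perm_sum:
  assumes "finite U" "card U = r" "2 \<le> r" "i < r"
  shows "(\<Sum>vs\<in>permutations_of_set U. (g (vs!i) (vs!((i+1) mod r)) :: real)) = (\<Sum>vs\<in>permutations_of_set U. g (vs!0) (vs!1))"
proof (rule sum.reindex_bij_witness[where j = "rotate i" and i = "rotate (r - i)"])
  fix a assume a: "a \<in> permutations_of_set U"
  then have la: "length a = r" using assms by (simp add: length_finite_permutations_of_set)
  show "rotate (r - i) (rotate i a) = a" using la assms(4) by (simp add: rotate_rotate)
  show "rotate i a \<in> permutations_of_set U" using a by (auto simp: permutations_of_set_def)
  show "g (rotate i a ! 0) (rotate i a ! 1) = g (a ! i) (a ! ((i + 1) mod r))"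
    using la assms by (simp add: nth_rotate)
next
  fix b assume b: "b \<in> permutations_of_set U"
  then have lb: "length b = r" using assms by (simp add: length_finite_permutations_of_set)
  show "rotate i (rotate (r - i) b) = b" using lb assms(4) by (simp add: rotate_rotate)
  show "rotate (r - i) b \<in> permutations_of_set U" using b by (auto simp: permutations_of_set_def)
qed

lemma avg_sum:
  assumes "finite U" "card U = r" "2 \<le> r"
  shows "(\<Sum>vs\<in>permutations_of_set U. \<Sum>i<r. (g (vs!i) (vs!((i+1) mod r)) :: real))
      = r * fact (r - 2) * (\<Sum>x\<in>U. \<Sum>y\<in>U-{x}. g x y)"
proof -
  have "(\<Sum>vs\<in>permutations_of_set U. \<Sum>i<r. g (vs!i) (vs!((i+1) mod r)))
      = (\<Sum>i<r. \<Sum>vs\<in>permutations_of_set U. g (vs!i) (vs!((i+1) mod r)))"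
    by (rule sum.swap)
  also have "\<dots> = (\<Sum>i<r. \<Sum>vs\<in>permutations_of_set U. g (vs!0) (vs!1))"
    by (rule sum.cong[OF refl]) (use rot_perm_sum[OF assms] in auto)
  also have "\<dots> = r * (fact (r - 2) * (\<Sum>x\<in>U. \<Sum>y\<in>U-{x}. g x y))"
    using first_two_sum[OF assms(1), of g] assms by simp
  finally show ?thesis by simp
qed

lemma pair_sum:
  assumes "finite U"
  shows "(\<Sum>x\<in>U. \<Sum>y\<in>U-{x}. (f {x,y} :: real)) = 2 * (\<Sum>e\<in>K_edges U. f e)"
proof -
  have fK: "finite (K_edges U)" unfolding K_edges_def
    by (rule finite_subset[of _ "Pow U"]) (use assms in auto)
  have "(\<Sum>x\<in>U. \<Sum>y\<in>U-{x}. f {x,y}) = (\<Sum>x\<in>U. \<Sum>e\<in>{e\<in>K_edges U. x \<in> e}. f e)"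
  proof (rule sum.cong[OF refl])
    fix x assume x: "x \<in> U"
    have "bij_betw (\<lambda>y. {x,y}) (U-{x}) {e\<in>K_edges U. x \<in> e}"
    proof (rule bij_betw_imageI)
      show "inj_on (\<lambda>y. {x,y}) (U-{x})" by (auto simp: inj_on_def doubleton_eq_iff)
      show "(\<lambda>y. {x,y}) ` (U-{x}) = {e\<in>K_edges U. x \<in> e}"
      proof
        show "(\<lambda>y. {x,y}) ` (U-{x}) \<subseteq> {e\<in>K_edges U. x \<in> e}" using x by (auto simp: K_edges_def)
        show "{e\<in>K_edges U. x \<in> e} \<subseteq> (\<lambda>y. {x,y}) ` (U-{x})"
        proof
          fix e assume e: "e \<in> {e\<in>K_edges U. x \<in> e}"
          then obtain a b where ab: "e = {a,b}" "a \<noteq> b" using card_2_iff[of e] by (auto simp: K_edges_def)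
          have eU: "e \<subseteq> U" "x \<in> e" using e by (auto simp: K_edges_def)
          show "e \<in> (\<lambda>y. {x,y}) ` (U-{x})"
          proof (cases "x = a")
            case True
            then show ?thesis using ab eU by (intro image_eqI[of _ _ b]) auto
          next
            case False
            then have "x = b" using ab eU by auto
            then show ?thesis using ab eU by (intro image_eqI[of _ _ a]) auto
          qed
        qed
      qed
    qed
    then show "(\<Sum>y\<in>U-{x}. f {x,y}) = (\<Sum>e\<in>{e\<in>K_edges U. x \<in> e}. f e)"
      by (rule sum.reindex_bij_betw)
  qed
  also have "\<dots> = (\<Sum>e\<in>K_edges U. \<Sum>x\<in>{x\<in>U. x \<in> e}. f e)"
    by (rule sum.swap_restrict[OF assms fK])
  also have "\<dots> = (\<Sum>e\<in>K_edges U. 2 * f e)"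
  proof (rule sum.cong[OF refl])
    fix e assume "e \<in> K_edges U"
    then have "{x\<in>U. x \<in> e} = e" "card e = 2" by (auto simp: K_edges_def)
    then show "(\<Sum>x\<in>{x\<in>U. x \<in> e}. f e) = 2 * f e" by simp
  qed
  finally show ?thesis by (simp add: sum_distrib_left)
qed



lemma eE_ne:
  assumes "distinct vs" "3 \<le> length vs" "i < length vs"
  shows "vs!i \<noteq> vs!((i+1) mod length vs)"
proof
  let ?n = "length vs"
  assume h: "vs!i = vs!((i+1) mod ?n)"
  have "0 < ?n" using assms by auto
  then have "(i+1) mod ?n < ?n" by simp
  then have "i = (i+1) mod ?n" using assms h by (simp add: nth_eq_iff_index_eq)
  then show False
  proof (cases "i + 1 < ?n")
    case True
    then show ?thesis using \<open>i = (i+1) mod ?n\<close> by simp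
  next
    case False
    then have "i + 1 = ?n" using assms(3) by simp
    then show ?thesis using \<open>i = (i+1) mod ?n\<close> assms(2) by simp
  qed
qed

lemma cyc_edges_K:
  assumes "is_cycle_list U vs"
  shows "cycle_edges vs \<subseteq> K_edges U"
proof
  fix e assume "e \<in> cycle_edges vs"
  then obtain i where i: "i < length vs" "e = eE vs i" unfolding cycle_edges_eq by auto
  have d: "distinct vs" "3 \<le> length vs" "set vs \<subseteq> U" using assms by (auto simp: is_cycle_list_def)
  have "0 < length vs" using d by auto
  then have m: "(i+1) mod length vs < length vs" by simp
  have "vs!i \<noteq> vs!((i+1) mod length vs)" using eE_ne[OF d(1,2) i(1)] .
  moreover have "vs!i \<in> U" "vs!((i+1) mod length vs) \<in> U" using d(3) i(1) m by (auto intro!: nth_mem)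
  ultimately show "e \<in> K_edges U" using i(2) unfolding eE_def K_edges_def by auto
qed

lemma finite_K: "finite U \<Longrightarrow> finite (K_edges U)"
  unfolding K_edges_def by (rule finite_subset[of _ "Pow U"]) auto

lemma W_pos:
  fixes w :: "'a set \<Rightarrow> real"
  assumes "finite U" "\<forall>e\<in>K_edges U. 0 < w e" "is_cycle_list U vs"
  shows "0 < sum w (cycle_edges vs)"
proof -
  have s: "cycle_edges vs \<subseteq> K_edges U" by (rule cyc_edges_K[OF assms(3)])
  have "0 < length vs" using assms(3) unfolding is_cycle_list_def by auto
  then have ne: "cycle_edges vs \<noteq> {}" unfolding cycle_edges_eq by blast
  have fin: "finite (cycle_edges vs)" using finite_subset[OF s finite_K[OF assms(1)]] .
  have pos: "\<And>e. e \<in> cycle_edges vs \<Longrightarrow> 0 < w e" using s assms(2) by auto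
  show ?thesis using sum_pos[OF fin ne pos] .
qed

lemma finite_cyc:
  assumes "finite U"
  shows "finite {vs. is_cycle_list U vs}"
proof (rule finite_subset[OF _ finite_lists_length_le[OF assms, of "card U"]])
  show "{vs. is_cycle_list U vs} \<subseteq> {xs. set xs \<subseteq> U \<and> length xs \<le> card U}"
    using assms by (auto simp: is_cycle_list_def distinct_card[symmetric] intro: card_mono)
qed

lemma finite_S:
  assumes "finite U"
  shows "finite {sum w (cycle_edges vs) | vs. is_cycle_list U vs \<and> e \<in> cycle_edges vs}"
proof -
  have "{sum w (cycle_edges vs) | vs. is_cycle_list U vs \<and> e \<in> cycle_edges vs}
     \<subseteq> (\<lambda>vs. sum w (cycle_edges vs)) ` {vs. is_cycle_list U vs}" by auto
  then show ?thesis using finite_cyc[OF assms] finite_surj by blast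
qed

lemma Cw_ge:
  assumes "finite U" "is_cycle_list U vs" "e \<in> cycle_edges vs"
  shows "sum w (cycle_edges vs) \<le> Cw U w e"
  unfolding Cw_def using assms by (intro Max_ge[OF finite_S[OF assms(1)]]) auto

lemma ham_cyc:
  assumes "finite U" "3 \<le> card U" "vs \<in> permutations_of_set U"
  shows "is_cycle_list U vs"
  using assms by (auto simp: is_cycle_list_def permutations_of_set_def distinct_card)

lemma ham_exists:
  assumes "finite U" "x \<in> U" "y \<in> U" "x \<noteq> y"
  shows "\<exists>vs\<in>permutations_of_set U. eE vs 0 = {x,y}"
proof -
  obtain l where l: "l \<in> permutations_of_set (U - {x,y})"
    using assms(1) permutations_of_set_empty_iff[of "U - {x,y}"] by blast
  have "x # y # l \<in> permutations_of_set U" using l assms by (auto simp: permutations_of_set_def)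
  moreover have "eE (x # y # l) 0 = {x,y}" by (simp add: eE_def)
  ultimately show ?thesis by blast
qed

lemma Cw_pos:
  assumes "finite U" "\<forall>e\<in>K_edges U. 0 < w e" "3 \<le> card U" "e \<in> K_edges U"
  shows "0 < Cw U w e"
proof -
  obtain x y where e: "e = {x,y}" "x \<noteq> y" "x \<in> U" "y \<in> U"
    using assms(4) card_2_iff[of e] by (auto simp: K_edges_def)
  obtain vs where vs: "vs \<in> permutations_of_set U" "eE vs 0 = e" using ham_exists[OF assms(1) e(3,4,2)] e by auto
  have c: "is_cycle_list U vs" using ham_cyc[OF assms(1,3) vs(1)] .
  have "e \<in> cycle_edges vs" using vs(2) c unfolding cycle_edges_eq is_cycle_list_def by force
  then show ?thesis using Cw_ge[OF assms(1) c] W_pos[OF assms(1,2) c] by (meson less_le_trans)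
qed


lemma key:
  assumes U: "finite U" "card U = r" "4 \<le> r" "\<forall>e\<in>K_edges U. 0 < w e"
  shows "(\<Sum>e\<in>K_edges U. w e / Cw U w e) \<le> (real r - 1)/2"
    and "(\<Sum>e\<in>K_edges U. w e / Cw U w e) = (real r - 1)/2 \<Longrightarrow>
         \<forall>vs\<in>permutations_of_set U. \<forall>i<r. Cw U w (eE vs i) = sum w (cycle_edges vs)"
proof -
  define S where "S = (\<Sum>e\<in>K_edges U. w e / Cw U w e)"
  define g where "g x y = w {x,y} / Cw U w {x,y}" for x y
  define T where "T vs = (\<Sum>i<r. g (vs!i) (vs!((i+1) mod r)))" for vs
  let ?P = "permutations_of_set U"
  have c3: "3 \<le> card U" using U by simp
  have lenP: "length vs = r" if "vs \<in> ?P" for vs using that U by (simp add: length_finite_permutations_of_set)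
  have Tdef: "T vs = (\<Sum>i<r. w (eE vs i) / Cw U w (eE vs i))" if "vs \<in> ?P" for vs
    unfolding T_def g_def eE_def using lenP[OF that] by simp
  have edge: "eE vs i \<in> cycle_edges vs" "eE vs i \<in> K_edges U" if "vs \<in> ?P" "i < r" for vs i
  proof -
    show "eE vs i \<in> cycle_edges vs" unfolding cycle_edges_eq using that lenP by auto
    then show "eE vs i \<in> K_edges U" using cyc_edges_K[OF ham_cyc[OF U(1) c3 that(1)]] by auto
  qed
  have term_le: "w (eE vs i) / Cw U w (eE vs i) \<le> w (eE vs i) / sum w (cycle_edges vs)"
    if "vs \<in> ?P" "i < r" for vs i
  proof -
    have c: "is_cycle_list U vs" using ham_cyc[OF U(1) c3 that(1)] .
    have "sum w (cycle_edges vs) \<le> Cw U w (eE vs i)" using Cw_ge[OF U(1) c edge(1)[OF that]] .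
    moreover have "0 < sum w (cycle_edges vs)" using W_pos[OF U(1) U(4) c] .
    moreover have "0 < w (eE vs i)" using U(4) edge(2)[OF that] by auto
    ultimately show ?thesis by (intro divide_left_mono) auto
  qed
  have sum1: "(\<Sum>i<r. w (eE vs i) / sum w (cycle_edges vs)) = 1" if "vs \<in> ?P" for vs
  proof -
    have c: "is_cycle_list U vs" using ham_cyc[OF U(1) c3 that(1)] .
    have "sum w (cycle_edges vs) = (\<Sum>i<r. w (eE vs i))"
      using W_sum[of vs w] c lenP[OF that] by (auto simp: is_cycle_list_def)
    moreover have "0 < sum w (cycle_edges vs)" using W_pos[OF U(1) U(4) c] .
    ultimately show ?thesis by (simp add: sum_divide_distrib[symmetric])
  qed
  have Tle: "T vs \<le> 1" if "vs \<in> ?P" for vs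
    unfolding Tdef[OF that] sum1[OF that, symmetric] using term_le[OF that] by (intro sum_mono) auto
  have avg: "(\<Sum>vs\<in>?P. T vs) = r * fact (r - 2) * (2 * S)"
    unfolding T_def using avg_sum[OF U(1,2), of g] pair_sum[OF U(1), of "\<lambda>e. w e / Cw U w e"] U(3)
    unfolding g_def S_def by simp
  have factr: "(fact r :: real) = r * (r - 1) * fact (r - 2)"
  proof -
    define m where "m = r - 2"
    have m: "r = Suc (Suc m)" using U(3) unfolding m_def by simp
    show ?thesis unfolding m by (simp add: algebra_simps)
  qed
  have sumP: "(\<Sum>vs\<in>?P. (1::real)) = fact r" using U by simp
  have "(\<Sum>vs\<in>?P. T vs) \<le> (\<Sum>vs\<in>?P. 1)" using Tle by (intro sum_mono) auto
  then have ineq: "r * fact (r - 2) * (2 * S) \<le> r * (r - 1) * fact (r - 2)"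
    unfolding avg sumP factr by (simp add: of_nat_diff)
  have pos: "(0::real) < r * fact (r - 2)" using U(3) by simp
  have ineq2: "2 * S \<le> real r - 1"
  proof -
    have "r * fact (r - 2) * (2 * S) \<le> r * fact (r - 2) * (real r - 1)"
      using ineq U(3) by (simp add: of_nat_diff algebra_simps)
    then show ?thesis using pos mult_le_cancel_left_pos by blast
  qed
  then show "(\<Sum>e\<in>K_edges U. w e / Cw U w e) \<le> (real r - 1)/2" unfolding S_def by simp
  assume eq: "(\<Sum>e\<in>K_edges U. w e / Cw U w e) = (real r - 1)/2"
  then have e2: "2 * S = real r - 1" unfolding S_def by simp
  have "(\<Sum>vs\<in>?P. T vs) = r * fact (r - 2) * (real r - 1)" unfolding avg e2 by simp
  also have "\<dots> = (\<Sum>vs\<in>?P. 1)" unfolding sumP factr using U(3) by (simp add: of_nat_diff)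
  finally have "(\<Sum>vs\<in>?P. T vs) = (\<Sum>vs\<in>?P. 1)" .
  then have "(\<Sum>vs\<in>?P. 1 - T vs) = 0" by (simp add: sum_subtractf)
  then have T1: "T vs = 1" if "vs \<in> ?P" for vs
    using sum_nonneg_eq_0_iff[of ?P "\<lambda>vs. 1 - T vs"] Tle that by auto
  show "\<forall>vs\<in>?P. \<forall>i<r. Cw U w (eE vs i) = sum w (cycle_edges vs)"
  proof (intro ballI allI impI)
    fix vs i assume vs: "vs \<in> ?P" and i: "i < r"
    define h where "h j = w (eE vs j) / sum w (cycle_edges vs) - w (eE vs j) / Cw U w (eE vs j)" for j
    have "(\<Sum>j<r. h j) = 0"
      using sum1[OF vs] T1[OF vs] Tdef[OF vs] unfolding h_def by (simp add: sum_subtractf)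
    moreover have "\<And>j. j \<in> {..<r} \<Longrightarrow> 0 \<le> h j" unfolding h_def using term_le[OF vs] by auto
    ultimately have "\<forall>j\<in>{..<r}. h j = 0" using sum_nonneg_eq_0_iff[of "{..<r}" h] by simp
    then have "h i = 0" using i by simp
    then have "w (eE vs i) / sum w (cycle_edges vs) - w (eE vs i) / Cw U w (eE vs i) = 0"
      unfolding h_def .
    moreover have "0 < w (eE vs i)" using U(4) edge(2)[OF vs i] by auto
    ultimately show "Cw U w (eE vs i) = sum w (cycle_edges vs)" by (simp add: divide_cancel_left)
  qed
qed



lemma split3:
  assumes "3 \<le> (r::nat)"
  shows "(\<Sum>i<r. (f i :: real)) = f 0 + f 1 + f 2 + (\<Sum>i<r-3. f (i+3))"
proof -
  define m where "m = r - 3"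
  have r: "r = Suc (Suc (Suc m))" using assms unfolding m_def by simp
  show ?thesis unfolding r sum.lessThan_Suc_shift by (simp add: numeral_2_eq_2 numeral_3_eq_3 add.assoc)
qed

lemma two_opt:
  fixes w :: "'a set \<Rightarrow> real"
  assumes U: "finite U" "card U = r" "4 \<le> r"
    and H: "\<forall>vs\<in>permutations_of_set U. \<forall>i<r. Cw U w (eE vs i) = sum w (cycle_edges vs)"
    and d: "u \<in> U" "x \<in> U" "v \<in> U" "y \<in> U" "distinct [u,x,v,y]"
  shows "w {u,x} + w {v,y} = w {u,v} + w {x,y}"
proof -
  obtain Q where Q: "Q \<in> permutations_of_set (U - {u,x,v,y})"
    using U(1) permutations_of_set_empty_iff[of "U - {u,x,v,y}"] by blast
  define vs1 where "vs1 = u#x#v#y#Q"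
  define vs2 where "vs2 = u#v#x#y#Q"
  have P1: "vs1 \<in> permutations_of_set U" using Q d unfolding vs1_def by (auto simp: permutations_of_set_def)
  have P2: "vs2 \<in> permutations_of_set U" using Q d unfolding vs2_def by (auto simp: permutations_of_set_def)
  have l1: "length vs1 = r" using P1 U by (simp add: length_finite_permutations_of_set)
  have l2: "length vs2 = r" using P2 U by (simp add: length_finite_permutations_of_set)
  have c3: "3 \<le> card U" using U by simp
  have c1: "is_cycle_list U vs1" using ham_cyc[OF U(1) c3 P1] .
  have c2: "is_cycle_list U vs2" using ham_cyc[OF U(1) c3 P2] .
  have agree: "vs1!k = vs2!k" if "k \<noteq> 1" "k \<noteq> 2" for k
  proof -
    have "k = 0 \<or> k = 3 \<or> (\<exists>m. k = Suc (Suc (Suc (Suc m))))" using that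
      by (metis One_nat_def Suc_eq_plus1 less_Suc0 not0_implies_Suc numeral_2_eq_2 numeral_3_eq_3 numeral_One)
    then show ?thesis unfolding vs1_def vs2_def by (auto simp: numeral_3_eq_3)
  qed
  have same: "eE vs1 i = eE vs2 i" if "3 \<le> i" "i < r" for i
  proof -
    have "(i+1) mod r \<noteq> 1 \<and> (i+1) mod r \<noteq> 2"
    proof (cases "i + 1 < r")
      case True then show ?thesis using that by simp
    next
      case False then have "i + 1 = r" using that by simp
      then show ?thesis by simp
    qed
    then show ?thesis unfolding eE_def l1 l2 using agree that by auto
  qed
  have W1: "sum w (cycle_edges vs1) = (\<Sum>i<r. w (eE vs1 i))"
    using W_sum[of vs1 w] c1 l1 by (auto simp: is_cycle_list_def)
  have W2: "sum w (cycle_edges vs2) = (\<Sum>i<r. w (eE vs2 i))"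
    using W_sum[of vs2 w] c2 l2 by (auto simp: is_cycle_list_def)
  have "sum w (cycle_edges vs1) = Cw U w (eE vs1 3)" using H P1 U(3) by simp
  also have "\<dots> = Cw U w (eE vs2 3)" using same[of 3] U(3) by simp
  also have "\<dots> = sum w (cycle_edges vs2)" using H P2 U(3) by simp
  finally have eqW: "(\<Sum>i<r. w (eE vs1 i)) = (\<Sum>i<r. w (eE vs2 i))" using W1 W2 by simp
  have rest: "(\<Sum>i<r-3. w (eE vs1 (i+3))) = (\<Sum>i<r-3. w (eE vs2 (i+3)))"
    by (rule sum.cong[OF refl]) (use same in auto)
  have m1: "1 mod r = 1" "2 mod r = 2" "3 mod r = 3" using U(3) by auto
  have e1: "eE vs1 0 = {u,x}" "eE vs1 1 = {x,v}" "eE vs1 2 = {v,y}"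
    unfolding eE_def l1 using m1 by (simp_all add: vs1_def numeral_2_eq_2 numeral_3_eq_3)
  have e2: "eE vs2 0 = {u,v}" "eE vs2 1 = {v,x}" "eE vs2 2 = {x,y}"
    unfolding eE_def l2 using m1 by (simp_all add: vs2_def numeral_2_eq_2 numeral_3_eq_3)
  have s3: "3 \<le> r" using U(3) by simp
  have A: "(\<Sum>i<r. w (eE vs1 i)) = w (eE vs1 0) + w (eE vs1 1) + w (eE vs1 2) + (\<Sum>i<r-3. w (eE vs1 (i+3)))"
    by (rule split3[OF s3])
  have B: "(\<Sum>i<r. w (eE vs2 i)) = w (eE vs2 0) + w (eE vs2 1) + w (eE vs2 2) + (\<Sum>i<r-3. w (eE vs2 (i+3)))"
    by (rule split3[OF s3])
  have "w {u,x} + w {x,v} + w {v,y} = w {u,v} + w {v,x} + w {x,y}"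
    using eqW rest A B unfolding e1 e2 by linarith
  then show ?thesis by (simp add: insert_commute)
qed


lemma third_elem:
  assumes "finite U" "3 \<le> card U"
  shows "\<exists>z\<in>U. z \<noteq> u \<and> z \<noteq> v"
proof (rule ccontr)
  assume "\<not> ?thesis"
  then have "U \<subseteq> {u,v}" by auto
  then have "card U \<le> card {u,v}" by (intro card_mono) auto
  also have "\<dots> \<le> 2" by (simp add: card_insert_if)
  finally show False using assms by simp
qed

lemma vi_exists:
  fixes w :: "'a set \<Rightarrow> real"
  assumes U: "finite U" "3 \<le> card U"
    and T: "\<And>A B C D. A \<in> U \<Longrightarrow> B \<in> U \<Longrightarrow> C \<in> U \<Longrightarrow> D \<in> U \<Longrightarrow> distinct [A,B,C,D] \<Longrightarrow>
            w {A,B} + w {C,D} = w {A,C} + w {B,D}"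
  shows "\<exists>a. \<forall>u\<in>U. \<forall>v\<in>U. u \<noteq> v \<longrightarrow> w {u,v} = (a u + a v) / 2"
proof -
  define \<phi> where "\<phi> u p q = w {u,p} + w {u,q} - w {p,q}" for u p q
  have step: "\<phi> u p q = \<phi> u p q'" if "u \<in> U" "p \<in> U" "q \<in> U" "q' \<in> U" "distinct [u,p,q]" "q' \<noteq> u" "q' \<noteq> p" for u p q q'
  proof (cases "q = q'")
    case False
    have "w {u,q} + w {q',p} = w {u,q'} + w {q,p}" using T[of u q q' p] that False by auto
    then show ?thesis unfolding \<phi>_def by (simp add: insert_commute)
  qed simp
  have sym: "\<phi> u p q = \<phi> u q p" for u p q unfolding \<phi>_def by (simp add: insert_commute)
  have indep: "\<phi> u p q = \<phi> u p' q'" if "u \<in> U" "p \<in> U" "q \<in> U" "p' \<in> U" "q' \<in> U"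
    "distinct [u,p,q]" "distinct [u,p',q']" for u p q p' q'
  proof (cases "p' = p")
    case True then show ?thesis using step[of u p q q'] that by auto
  next
    case False
    show ?thesis
    proof (cases "p' = q")
      case False
      have "\<phi> u p q = \<phi> u p p'" using step[of u p q p'] that \<open>p' \<noteq> p\<close> by auto
      also have "\<dots> = \<phi> u p' p" by (rule sym)
      also have "\<dots> = \<phi> u p' q'" using step[of u p' p q'] that \<open>p' \<noteq> p\<close> by auto
      finally show ?thesis .
    next
      case True
      have "\<phi> u p q = \<phi> u q p" by (rule sym)
      also have "\<dots> = \<phi> u q q'" using step[of u q p q'] that True by auto
      finally show ?thesis using True by simp
    qed
  qed
  define a where "a u = (SOME c. \<exists>p\<in>U. \<exists>q\<in>U. distinct [u,p,q] \<and> c = \<phi> u p q)" for u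
  have a_eq: "a u = \<phi> u p q" if "u \<in> U" "p \<in> U" "q \<in> U" "distinct [u,p,q]" for u p q
  proof -
    have "\<exists>c. \<exists>p\<in>U. \<exists>q\<in>U. distinct [u,p,q] \<and> c = \<phi> u p q" using that by blast
    then have "\<exists>p\<in>U. \<exists>q\<in>U. distinct [u,p,q] \<and> a u = \<phi> u p q"
      unfolding a_def by (rule someI_ex)
    then obtain p0 q0 where "p0 \<in> U" "q0 \<in> U" "distinct [u,p0,q0]" "a u = \<phi> u p0 q0" by blast
    then show ?thesis using indep[of u p0 q0 p q] that by simp
  qed
  show ?thesis
  proof (intro exI ballI impI)
    fix u v assume uv: "u \<in> U" "v \<in> U" "u \<noteq> v"
    obtain z where z: "z \<in> U" "z \<noteq> u" "z \<noteq> v" using third_elem[OF U] by blast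
    have "a u = \<phi> u v z" using a_eq uv z by auto
    moreover have "a v = \<phi> v u z" using a_eq uv z by auto
    ultimately show "w {u,v} = (a u + a v) / 2" unfolding \<phi>_def by (simp add: insert_commute)
  qed
qed

lemma a_nonneg:
  fixes w :: "'a set \<Rightarrow> real"
  assumes U: "finite U" "card U = r" "4 \<le> r" "\<forall>e\<in>K_edges U. 0 < w e"
    and H: "\<forall>vs\<in>permutations_of_set U. \<forall>i<r. Cw U w (eE vs i) = sum w (cycle_edges vs)"
    and a: "\<forall>u\<in>U. \<forall>v\<in>U. u \<noteq> v \<longrightarrow> w {u,v} = (a u + a v) / 2"
    and u: "u \<in> U"
  shows "0 \<le> a u"
proof -
  let ?U' = "U - {u}"
  obtain Q where Q: "Q \<in> permutations_of_set ?U'"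
    using U(1) permutations_of_set_empty_iff[of ?U'] by blast
  have cU': "card ?U' = r - 1" using U u by simp
  have lQ: "length Q = r - 1" using Q cU' by (simp add: length_finite_permutations_of_set)
  have cQ: "is_cycle_list U Q" using Q lQ U(3) by (auto simp: is_cycle_list_def permutations_of_set_def)
  have e0: "eE Q 0 \<in> cycle_edges Q" unfolding cycle_edges_eq using lQ U(3) by auto
  then have eK: "eE Q 0 \<in> K_edges U" using cyc_edges_K[OF cQ] by auto
  then obtain x y where e: "eE Q 0 = {x,y}" "x \<noteq> y" "x \<in> U" "y \<in> U"
    using card_2_iff[of "eE Q 0"] by (auto simp: K_edges_def)
  obtain Hc where Hc: "Hc \<in> permutations_of_set U" "eE Hc 0 = {x,y}" using ham_exists[OF U(1) e(3,4,2)] by auto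
  have cH: "is_cycle_list U Hc" using ham_cyc[OF U(1) _ Hc(1)] U by simp
  have "Cw U w (eE Hc 0) = sum w (cycle_edges Hc)" using H Hc(1) U(3) by auto
  then have "Cw U w (eE Q 0) = sum w (cycle_edges Hc)" using e(1) Hc(2) by simp
  also have "\<dots> = sum a U" using cyc_weight[OF a cH] Hc(1) by (simp add: permutations_of_set_def)
  finally have C1: "Cw U w (eE Q 0) = sum a U" .
  have "sum w (cycle_edges Q) = sum a ?U'" using cyc_weight[OF a cQ] Q by (simp add: permutations_of_set_def)
  moreover have "sum w (cycle_edges Q) \<le> Cw U w (eE Q 0)" using Cw_ge[OF U(1) cQ e0] .
  moreover have "sum a U = a u + sum a ?U'" using U(1) u by (simp add: sum.remove)
  ultimately show ?thesis using C1 by simp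
qed

lemma vi_Cw:
  fixes w :: "'a set \<Rightarrow> real"
  assumes U: "finite U" "3 \<le> card U" and vi: "vertex_induced_by U w a" and e: "e \<in> K_edges U"
  shows "Cw U w e = sum a U"
proof -
  have a: "\<forall>u\<in>U. \<forall>v\<in>U. u \<noteq> v \<longrightarrow> w {u,v} = (a u + a v) / 2" and nn: "\<forall>v\<in>U. 0 \<le> a v"
    using vi by (auto simp: vertex_induced_by_def)
  obtain x y where xy: "e = {x,y}" "x \<noteq> y" "x \<in> U" "y \<in> U"
    using e card_2_iff[of e] by (auto simp: K_edges_def)
  obtain Hc where Hc: "Hc \<in> permutations_of_set U" "eE Hc 0 = e" using ham_exists[OF U(1) xy(3,4,2)] xy by auto
  have cH: "is_cycle_list U Hc" using ham_cyc[OF U(1) U(2) Hc(1)] .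
  have eH: "e \<in> cycle_edges Hc" using Hc(2) cH unfolding cycle_edges_eq is_cycle_list_def by force
  show ?thesis unfolding Cw_def
  proof (rule Max_eqI[OF finite_S[OF U(1)]])
    fix y assume "y \<in> {sum w (cycle_edges vs) |vs. is_cycle_list U vs \<and> e \<in> cycle_edges vs}"
    then obtain vs where vs: "y = sum w (cycle_edges vs)" "is_cycle_list U vs" by auto
    have "y = sum a (set vs)" using vs cyc_weight[OF a vs(2)] by simp
    also have "\<dots> \<le> sum a U" using vs(2) nn U(1) by (intro sum_mono2) (auto simp: is_cycle_list_def)
    finally show "y \<le> sum a U" .
  next
    have "sum w (cycle_edges Hc) = sum a U" using cyc_weight[OF a cH] Hc(1) by (simp add: permutations_of_set_def)
    then show "sum a U \<in> {sum w (cycle_edges vs) |vs. is_cycle_list U vs \<and> e \<in> cycle_edges vs}"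
      using cH eH by force
  qed
qed

lemma vi_sum:
  fixes w :: "'a set \<Rightarrow> real"
  assumes U: "finite U" "card U = r" "4 \<le> r" "\<forall>e\<in>K_edges U. 0 < w e" and vi: "vertex_induced_by U w a"
  shows "(\<Sum>e\<in>K_edges U. w e / Cw U w e) = (real r - 1) / 2"
proof -
  have c3: "3 \<le> card U" using U by simp
  have a: "\<forall>u\<in>U. \<forall>v\<in>U. u \<noteq> v \<longrightarrow> w {u,v} = (a u + a v) / 2"
    using vi by (auto simp: vertex_induced_by_def)
  define A where "A = sum a U"
  obtain Hc where Hc: "Hc \<in> permutations_of_set U" using U(1) permutations_of_set_empty_iff[of U] by blast
  have cH: "is_cycle_list U Hc" using ham_cyc[OF U(1) c3 Hc] .
  have Apos: "0 < A" using W_pos[OF U(1) U(4) cH] cyc_weight[OF a cH] Hc unfolding A_def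
    by (simp add: permutations_of_set_def)
  have "(\<Sum>e\<in>K_edges U. w e / Cw U w e) = (\<Sum>e\<in>K_edges U. w e / A)"
    using vi_Cw[OF U(1) c3 vi] unfolding A_def by simp
  also have "\<dots> = (\<Sum>e\<in>K_edges U. w e) / A" by (simp add: sum_divide_distrib)
  also have "(\<Sum>e\<in>K_edges U. w e) = (real r - 1) * A / 2"
  proof -
    have inner: "(\<Sum>y\<in>U-{x}. w {x,y}) = ((real r - 2) * a x + A) / 2" if x: "x \<in> U" for x
    proof -
      have "(\<Sum>y\<in>U-{x}. w {x,y}) = (\<Sum>y\<in>U-{x}. (a x + a y) / 2)"
        using a x by (intro sum.cong) auto
      also have "\<dots> = ((\<Sum>y\<in>U-{x}. a x) + (\<Sum>y\<in>U-{x}. a y)) / 2"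
        by (simp only: sum_divide_distrib[symmetric] sum.distrib)
      also have "(\<Sum>y\<in>U-{x}. a x) = (real r - 1) * a x" using U x by (simp add: of_nat_diff)
      also have "(\<Sum>y\<in>U-{x}. a y) = A - a x" unfolding A_def using U(1) x by (simp add: sum_diff1)
      finally show ?thesis by (simp add: algebra_simps)
    qed
    have "2 * (\<Sum>e\<in>K_edges U. w e) = (\<Sum>x\<in>U. \<Sum>y\<in>U-{x}. w {x,y})" using pair_sum[OF U(1), of w] by simp
    also have "\<dots> = (\<Sum>x\<in>U. ((real r - 2) * a x + A) / 2)" using inner by (intro sum.cong) auto
    also have "\<dots> = ((real r - 2) * A + r * A) / 2"
      unfolding A_def using U(2) by (simp add: sum.distrib sum_divide_distrib[symmetric] sum_distrib_left)
    finally show ?thesis by (simp add: algebra_simps)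
  qed
  finally show ?thesis using Apos by simp
qed

theorem proposition3p9:
  fixes U :: "'a set" and w :: "'a set \<Rightarrow> real" and r :: nat
  assumes "finite U" and "card U = r" and "4 \<le> r"
    and "\<forall>e\<in>K_edges U. 0 < w e"
  shows "((\<Sum>e\<in>K_edges U. w e / Cw U w e) = (real r - 1) / 2
            \<longleftrightarrow> (\<exists>a. vertex_induced_by U w a))
         \<and> (\<forall>a. vertex_induced_by U w a \<longrightarrow> (\<forall>e\<in>K_edges U. Cw U w e = (\<Sum>v\<in>U. a v)))"
proof (intro conjI iffI allI impI ballI)
  have c3: "3 \<le> card U" using assms by simp
  show "Cw U w e = (\<Sum>v\<in>U. a v)" if "vertex_induced_by U w a" "e \<in> K_edges U" for a e
    using vi_Cw[OF assms(1) c3 that] .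
next
  show "(\<Sum>e\<in>K_edges U. w e / Cw U w e) = (real r - 1) / 2" if "\<exists>a. vertex_induced_by U w a"
    using that vi_sum[OF assms] by blast
next
  assume eq: "(\<Sum>e\<in>K_edges U. w e / Cw U w e) = (real r - 1) / 2"
  have H: "\<forall>vs\<in>permutations_of_set U. \<forall>i<r. Cw U w (eE vs i) = sum w (cycle_edges vs)"
    using key(2)[OF assms eq] .
  have c3: "3 \<le> card U" using assms by simp
  have T: "w {A,B} + w {C,D} = w {A,C} + w {B,D}"
    if "A \<in> U" "B \<in> U" "C \<in> U" "D \<in> U" "distinct [A,B,C,D]" for A B C D
    using two_opt[OF assms(1-3) H that] .
  obtain a where a: "\<forall>u\<in>U. \<forall>v\<in>U. u \<noteq> v \<longrightarrow> w {u,v} = (a u + a v) / 2"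
    using vi_exists[of U w, OF assms(1) c3 T] by blast
  have "\<forall>u\<in>U. 0 \<le> a u" using a_nonneg[OF assms H a] by blast
  then show "\<exists>a. vertex_induced_by U w a" using a unfolding vertex_induced_by_def by blast
qed


end
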